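(* Let $S$ be a semilattice and $\omega$ a submultiplicative weight on $S$ such that $(S,\omega)$ is flighty. Then $\ell^1_\omega(S)$ is AMNM. (In particular this holds whenever $\omega$ is bounded, and whenever $S$ has finite breadth — e.g. finite width or finite height — for every submultiplicative weight $\omega$.)
   Context: A semilattice is a commutative semigroup in which every element is idempotent. A weight is $\omega:S\to(0,\infty)$, submultiplicative if $\omega(xy)\le\omega(x)\omega(y)$. $\ell^1_\omega(S)$ is the Banach space of $a:S\to\mathbb C$ with $\|a\|=\sum_s|a(s)|\omega(s)<\infty$ with convolution product ($\delta_x*\delta_y=\delta_{xy}$). For $E\subseteq S$, $\langle E\rangle$ is the subsemigroup generated by $E$ and $\langle E\rangle_n=\{x_1\cdots x_n: x_i\in E\}$. The breadth of $S$ is $\sup_{E\subseteq S}\inf\{n:\langle E\rangle_n=\langle E\rangle\}$. For $K>0$ let $W_K=\{x\in S:\omega(x)\le K\}$; $(S,\omega)$ is flighty if for every $K>0$, $\sup\{\omega(y): y\in\langle W_K\rangle\}<\infty$. For a bounded linear map $T$ between Banach algebras, $\operatorname{def}(T)=\sup\{\|T(xy)-T(x)T(y)\|:\|x\|,\|y\|\le1\}$. A Banach algebra $A$ is AMNM if for every $\varepsilon>0$ there is $\delta>0$ such that every $\psi\in A^*$ with $\operatorname{def}(\psi)\le\delta$ is within distance $\varepsilon$ (in $A^*$) of a bounded multiplicative linear functional (possibly $0$). *)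

theory Defs
  imports "HOL-Analysis.Analysis"
begin

text \<open>The semilattice S is the carrier type 'a with product f (locale semilattice:
  associative, commutative, idempotent).\<close>

definition l1w :: "('a \<Rightarrow> real) \<Rightarrow> ('a \<Rightarrow> complex) set" where
  "l1w \<omega> = {a. (\<lambda>s. norm (a s) * \<omega> s) summable_on UNIV}"

definition l1norm :: "('a \<Rightarrow> real) \<Rightarrow> ('a \<Rightarrow> complex) \<Rightarrow> real" where
  "l1norm \<omega> a = (\<Sum>\<^sub>\<infinity>s. norm (a s) * \<omega> s)"

text \<open>Convolution: delta_x * delta_y = delta_(f x y).\<close>
definition conv :: "('a \<Rightarrow> 'a \<Rightarrow> 'a) \<Rightarrow> ('a \<Rightarrow> complex) \<Rightarrow> ('a \<Rightarrow> complex) \<Rightarrow> ('a \<Rightarrow> complex)" where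
  "conv f a b = (\<lambda>t. \<Sum>\<^sub>\<infinity>p\<in>{p. f (fst p) (snd p) = t}. a (fst p) * b (snd p))"

definition bdd_lin_fun :: "('a \<Rightarrow> real) \<Rightarrow> (('a \<Rightarrow> complex) \<Rightarrow> complex) \<Rightarrow> bool" where
  "bdd_lin_fun \<omega> \<psi> \<longleftrightarrow>
     (\<forall>a\<in>l1w \<omega>. \<forall>b\<in>l1w \<omega>. \<psi> (\<lambda>s. a s + b s) = \<psi> a + \<psi> b) \<and>
     (\<forall>a\<in>l1w \<omega>. \<forall>c. \<psi> (\<lambda>s. c * a s) = c * \<psi> a) \<and>
     (\<exists>C. \<forall>a\<in>l1w \<omega>. norm (\<psi> a) \<le> C * l1norm \<omega> a)"

definition dual_norm :: "('a \<Rightarrow> real) \<Rightarrow> (('a \<Rightarrow> complex) \<Rightarrow> complex) \<Rightarrow> real" where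
  "dual_norm \<omega> \<psi> = Sup {norm (\<psi> a) | a. a \<in> l1w \<omega> \<and> l1norm \<omega> a \<le> 1}"

text \<open>Bounded multiplicative linear functionals (the zero functional included).\<close>
definition mult_fun :: "('a \<Rightarrow> 'a \<Rightarrow> 'a) \<Rightarrow> ('a \<Rightarrow> real) \<Rightarrow> (('a \<Rightarrow> complex) \<Rightarrow> complex) \<Rightarrow> bool" where
  "mult_fun f \<omega> \<phi> \<longleftrightarrow> bdd_lin_fun \<omega> \<phi> \<and>
     (\<forall>a\<in>l1w \<omega>. \<forall>b\<in>l1w \<omega>. \<phi> (conv f a b) = \<phi> a * \<phi> b)"

definition defect :: "('a \<Rightarrow> 'a \<Rightarrow> 'a) \<Rightarrow> ('a \<Rightarrow> real) \<Rightarrow> (('a \<Rightarrow> complex) \<Rightarrow> complex) \<Rightarrow> real" where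
  "defect f \<omega> \<psi> = Sup {norm (\<psi> (conv f a b) - \<psi> a * \<psi> b) | a b.
       a \<in> l1w \<omega> \<and> b \<in> l1w \<omega> \<and> l1norm \<omega> a \<le> 1 \<and> l1norm \<omega> b \<le> 1}"

definition AMNM :: "('a \<Rightarrow> 'a \<Rightarrow> 'a) \<Rightarrow> ('a \<Rightarrow> real) \<Rightarrow> bool" where
  "AMNM f \<omega> \<longleftrightarrow> (\<forall>\<epsilon>>0. \<exists>\<delta>>0. \<forall>\<psi>. bdd_lin_fun \<omega> \<psi> \<and> defect f \<omega> \<psi> \<le> \<delta> \<longrightarrow>
      (\<exists>\<phi>. mult_fun f \<omega> \<phi> \<and> dual_norm \<omega> (\<lambda>a. \<psi> a - \<phi> a) \<le> \<epsilon>))"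

inductive_set gen :: "('a \<Rightarrow> 'a \<Rightarrow> 'a) \<Rightarrow> 'a set \<Rightarrow> 'a set" for f E where
  base: "x \<in> E \<Longrightarrow> x \<in> gen f E"
| step: "x \<in> gen f E \<Longrightarrow> y \<in> gen f E \<Longrightarrow> f x y \<in> gen f E"

definition submult_weight :: "('a \<Rightarrow> 'a \<Rightarrow> 'a) \<Rightarrow> ('a \<Rightarrow> real) \<Rightarrow> bool" where
  "submult_weight f \<omega> \<longleftrightarrow> (\<forall>x. \<omega> x > 0) \<and> (\<forall>x y. \<omega> (f x y) \<le> \<omega> x * \<omega> y)"

definition flighty :: "('a \<Rightarrow> 'a \<Rightarrow> 'a) \<Rightarrow> ('a \<Rightarrow> real) \<Rightarrow> bool" where
  "flighty f \<omega> \<longleftrightarrow> (\<forall>K>0. bdd_above (\<omega> ` gen f {x. \<omega> x \<le> K}))"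

end

theory Submission
  imports Defs
begin

lemma finsupp_has_sum:
  assumes "finite A" "\<And>x. x \<notin> A \<Longrightarrow> g x = 0"
  shows "(g has_sum sum g A) UNIV"
proof -
  have "(g has_sum sum g A) A" by (rule has_sum_finite[OF assms(1)])
  moreover have "(g has_sum sum g A) A \<longleftrightarrow> (g has_sum sum g A) UNIV"
    by (rule has_sum_cong_neutral) (use assms(2) in auto)
  ultimately show ?thesis by simp
qed

lemma prod_has_sum_real:
  fixes u v :: "_ \<Rightarrow> real"
  assumes "u summable_on A" "v summable_on B" "\<And>x. x\<in>A \<Longrightarrow> u x \<ge> 0" "\<And>y. y\<in>B \<Longrightarrow> v y \<ge> 0"
  shows "((\<lambda>p. u (fst p) * v (snd p)) has_sum (infsum u A * infsum v B)) (A \<times> B)"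
proof -
  have f: "((\<lambda>y. (\<lambda>p. u (fst p) * v (snd p)) (x, y)) has_sum (u x * infsum v B)) B" if "x\<in>A" for x
    using has_sum_cmult_right[OF has_sum_infsum[OF assms(2)]] by simp
  have g: "((\<lambda>x. u x * infsum v B) has_sum (infsum u A * infsum v B)) A"
    using has_sum_cmult_left[OF has_sum_infsum[OF assms(1)]] by simp
  have s: "(\<lambda>p. u (fst p) * v (snd p)) summable_on Sigma A (\<lambda>_. B)"
    by (rule summable_on_SigmaI[OF f]) (use g assms in \<open>auto simp: summable_on_def\<close>)
  show ?thesis using has_sum_SigmaI[OF f g s] by simp
qed

lemma prod_has_sum_cplx:
  fixes a b :: "_ \<Rightarrow> complex"
  assumes "(\<lambda>x. norm (a x)) summable_on A" "(\<lambda>x. norm (b x)) summable_on B"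
  shows "((\<lambda>p. a (fst p) * b (snd p)) has_sum (infsum a A * infsum b B)) (A \<times> B)"
proof -
  have n: "(\<lambda>p. norm (a (fst p)) * norm (b (snd p))) summable_on (A \<times> B)"
    using prod_has_sum_real[OF assms] summable_on_def by auto
  have s: "(\<lambda>p. a (fst p) * b (snd p)) summable_on Sigma A (\<lambda>_. B)"
    by (rule abs_summable_summable) (use n in \<open>simp add: norm_mult\<close>)
  have sa: "a summable_on A" "b summable_on B" using assms abs_summable_summable by auto
  have f: "((\<lambda>y. (\<lambda>p. a (fst p) * b (snd p)) (x,y)) has_sum (a x * infsum b B)) B" if "x \<in> A" for x
    using has_sum_cmult_right[OF has_sum_infsum[OF sa(2)]] by simp
  have g: "((\<lambda>x. a x * infsum b B) has_sum (infsum a A * infsum b B)) A"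
    using has_sum_cmult_left[OF has_sum_infsum[OF sa(1)]] by simp
  show ?thesis using has_sum_SigmaI[OF f g s] by simp
qed

lemma tail_small:
  fixes g :: "'a \<Rightarrow> real"
  assumes "(g has_sum S) UNIV" "e > 0"
  shows "\<exists>A. finite A \<and> \<bar>S - sum g A\<bar> < e"
proof -
  have "\<forall>\<^sub>F X in finite_subsets_at_top UNIV. dist (sum g X) S < e"
    using assms unfolding has_sum_def tendsto_iff by blast
  then obtain X where "finite X" "dist (sum g X) S < e"
    unfolding eventually_finite_subsets_at_top by blast
  then show ?thesis by (auto simp: dist_real_def)
qed

lemma tail_sum:
  fixes g :: "'a \<Rightarrow> real"
  assumes "g summable_on UNIV" "finite A"
  shows "infsum g (-A) = infsum g UNIV - sum g A"
proof -
  have "infsum g (A \<union> -A) = infsum g A + infsum g (-A)"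
    by (rule infsum_Un_disjoint) (use assms summable_on_subset in auto)
  then show ?thesis using assms by simp
qed

definition dl :: "'a \<Rightarrow> 'a \<Rightarrow> complex" where "dl s = (\<lambda>x. if x = s then 1 else 0)"

definition lin :: "('a \<Rightarrow> real) \<Rightarrow> (('a \<Rightarrow> complex) \<Rightarrow> complex) \<Rightarrow> bool" where
  "lin \<omega> h \<longleftrightarrow> (\<forall>a\<in>l1w \<omega>. \<forall>b\<in>l1w \<omega>. h (\<lambda>s. a s + b s) = h a + h b) \<and>
     (\<forall>a\<in>l1w \<omega>. \<forall>c. h (\<lambda>s. c * a s) = c * h a)"

locale wsl = semilattice f for f :: "'a \<Rightarrow> 'a \<Rightarrow> 'a" +
  fixes \<omega> :: "'a \<Rightarrow> real"
  assumes sw: "submult_weight f \<omega>"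
begin

lemma w_pos: "\<omega> x > 0" using sw unfolding submult_weight_def by auto
lemma w_sub: "\<omega> (f x y) \<le> \<omega> x * \<omega> y" using sw unfolding submult_weight_def by auto
lemma w_ge1: "\<omega> x \<ge> 1"
proof -
  have "\<omega> x \<le> \<omega> x * \<omega> x" using w_sub[of x x] by simp
  then show ?thesis using w_pos[of x] by simp
qed

lemma nle: "norm (a s) \<le> norm (a s) * \<omega> s"
  using mult_left_mono[OF w_ge1, of "norm (a s)" s] by simp

lemma l1w_abs: assumes "a \<in> l1w \<omega>" shows "(\<lambda>s. norm (a s)) summable_on A"
proof -
  have "(\<lambda>s. norm (a s) * \<omega> s) summable_on A" using assms summable_on_subset by (auto simp: l1w_def)
  then show ?thesis by (rule summable_on_comparison_test) (use nle in auto)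
qed

lemma l1w_summ: assumes "a \<in> l1w \<omega>" shows "a summable_on A"
  using abs_summable_summable[OF l1w_abs[OF assms]] .

lemma l1norm_nonneg: "l1norm \<omega> a \<ge> 0"
  unfolding l1norm_def by (rule infsum_nonneg) (simp add: w_pos less_imp_le)

lemma l1w_wsum: "a \<in> l1w \<omega> \<Longrightarrow> ((\<lambda>s. norm (a s) * \<omega> s) has_sum l1norm \<omega> a) UNIV"
  by (simp add: l1w_def l1norm_def)

lemma l1w_add: assumes "a \<in> l1w \<omega>" "b \<in> l1w \<omega>" shows "(\<lambda>s. a s + b s) \<in> l1w \<omega>"
proof -
  have "(\<lambda>s. norm (a s) * \<omega> s + norm (b s) * \<omega> s) summable_on UNIV"
    using assms by (intro summable_on_add) (auto simp: l1w_def)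
  moreover have "norm (a s + b s) * \<omega> s \<le> norm (a s) * \<omega> s + norm (b s) * \<omega> s" for s
  proof -
    have "norm (a s + b s) * \<omega> s \<le> (norm (a s) + norm (b s)) * \<omega> s"
      by (rule mult_right_mono[OF norm_triangle_ineq]) (use w_pos[of s] in simp)
    then show ?thesis by (simp add: distrib_right)
  qed
  ultimately show ?thesis unfolding l1w_def
    using summable_on_comparison_test[of "\<lambda>s. norm (a s) * \<omega> s + norm (b s) * \<omega> s" UNIV "\<lambda>s. norm (a s + b s) * \<omega> s"]
    by (simp add: w_pos less_imp_le)
qed

lemma l1w_scale: assumes "a \<in> l1w \<omega>" shows "(\<lambda>s. c * a s) \<in> l1w \<omega>"
proof -
  have "(\<lambda>s. norm c * (norm (a s) * \<omega> s)) summable_on UNIV"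
    using assms by (intro summable_on_cmult_right) (auto simp: l1w_def)
  then show ?thesis unfolding l1w_def by (simp add: norm_mult mult.assoc)
qed

lemma l1w_zero: "(\<lambda>s. 0) \<in> l1w \<omega>" by (simp add: l1w_def)
lemma l1norm_zero: "l1norm \<omega> (\<lambda>s. 0) = 0" by (simp add: l1norm_def)

lemma l1w_finsupp: assumes "finite A" "\<And>x. x \<notin> A \<Longrightarrow> a x = 0" shows "a \<in> l1w \<omega>"
  unfolding l1w_def summable_on_def using finsupp_has_sum[of A "\<lambda>s. norm (a s) * \<omega> s"] assms by auto

lemma dl_l1: "dl s \<in> l1w \<omega>" by (rule l1w_finsupp[of "{s}"]) (auto simp: dl_def)

lemma dl_norm: "l1norm \<omega> (dl s) = \<omega> s"
proof -
  have "((\<lambda>x. norm (dl s x) * \<omega> x) has_sum (\<Sum>x\<in>{s}. norm (dl s x) * \<omega> x)) UNIV"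
    by (rule finsupp_has_sum) (auto simp: dl_def)
  then show ?thesis unfolding l1norm_def by (simp add: infsumI dl_def)
qed

lemma lin_add: "lin \<omega> h \<Longrightarrow> a\<in>l1w \<omega> \<Longrightarrow> b\<in>l1w \<omega> \<Longrightarrow> h (\<lambda>s. a s + b s) = h a + h b"
  by (simp add: lin_def)
lemma lin_scale: "lin \<omega> h \<Longrightarrow> a\<in>l1w \<omega> \<Longrightarrow> h (\<lambda>s. c * a s) = c * h a"
  by (simp add: lin_def)

lemma lin_zero: assumes "lin \<omega> h" shows "h (\<lambda>s. 0) = 0"
proof -
  show ?thesis using lin_scale[OF assms l1w_zero, of 0] by simp
qed

lemma restr_eval:
  assumes "lin \<omega> h" "finite A"
  shows "h (\<lambda>x. if x\<in>A then a x else 0) = (\<Sum>s\<in>A. a s * h (dl s))"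
  using assms(2)
proof (induction A)
  case empty then show ?case using lin_zero[OF assms(1)] by simp
next
  case (insert s A)
  have e: "(\<lambda>x. if x\<in>insert s A then a x else 0) = (\<lambda>x. (if x\<in>A then a x else 0) + a s * dl s x)"
    using insert.hyps by (auto simp: dl_def fun_eq_iff)
  have m1: "(\<lambda>x. if x\<in>A then a x else 0) \<in> l1w \<omega>" by (rule l1w_finsupp[OF insert.hyps(1)]) auto
  have m2: "(\<lambda>x. a s * dl s x) \<in> l1w \<omega>" by (rule l1w_scale[OF dl_l1])
  have "h (\<lambda>x. if x\<in>insert s A then a x else 0) = h (\<lambda>x. if x\<in>A then a x else 0) + h (\<lambda>x. a s * dl s x)"
    unfolding e using lin_add[OF assms(1) m1 m2] by simp
  also have "h (\<lambda>x. a s * dl s x) = a s * h (dl s)" using lin_scale[OF assms(1) dl_l1] by simp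
  finally show ?case using insert by (simp add: add.commute)
qed

lemma dual_bound:
  assumes "lin \<omega> h" "\<forall>a\<in>l1w \<omega>. norm (h a) \<le> C * l1norm \<omega> a"
    "\<And>s. norm (h (dl s)) \<le> e * \<omega> s" "e \<ge> 0" "a \<in> l1w \<omega>"
  shows "norm (h a) \<le> e * l1norm \<omega> a"
proof -
  define C' where "C' = max C 0"
  have C': "C' \<ge> 0" "\<And>a. a\<in>l1w \<omega> \<Longrightarrow> norm (h a) \<le> C' * l1norm \<omega> a"
  proof -
    show "C' \<ge> 0" unfolding C'_def by simp
    fix a assume "a \<in> l1w \<omega>"
    then have "norm (h a) \<le> C * l1norm \<omega> a" using assms(2) by blast
    also have "\<dots> \<le> C' * l1norm \<omega> a" unfolding C'_def by (rule mult_right_mono[OF _ l1norm_nonneg]) simp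
    finally show "norm (h a) \<le> C' * l1norm \<omega> a" .
  qed
  let ?g = "\<lambda>s. norm (a s) * \<omega> s"
  have gs: "(?g has_sum l1norm \<omega> a) UNIV" using l1w_wsum[OF assms(5)] .
  show ?thesis
  proof (rule field_le_epsilon)
    fix \<eta> :: real assume "\<eta> > 0"
    then have "\<eta> / (C'+1) > 0" using C' by simp
    then obtain A where A: "finite A" "\<bar>l1norm \<omega> a - sum ?g A\<bar> < \<eta> / (C'+1)"
      using tail_small[OF gs] by blast
    define aA where "aA = (\<lambda>x. if x\<in>A then a x else 0)"
    define r where "r = (\<lambda>x. if x\<in>A then 0 else a x)"
    have aA: "aA \<in> l1w \<omega>" unfolding aA_def by (rule l1w_finsupp[OF A(1)]) auto
    have rs: "(\<lambda>s. norm (r s) * \<omega> s) summable_on UNIV"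
    proof -
      have as: "?g summable_on UNIV" using assms(5) by (simp add: l1w_def)
      show ?thesis unfolding r_def
        by (rule summable_on_comparison_test[OF as]) (auto simp: w_pos less_imp_le)
    qed
    hence r: "r \<in> l1w \<omega>" by (simp add: l1w_def)
    have "l1norm \<omega> r = infsum ?g (-A)"
      unfolding l1norm_def r_def by (rule infsum_cong_neutral) auto
    also have "\<dots> = l1norm \<omega> a - sum ?g A"
      using tail_sum[OF _ A(1)] gs unfolding l1norm_def by (auto simp: summable_on_def)
    finally have rn: "l1norm \<omega> r < \<eta> / (C'+1)" using A(2) by simp
    have "a = (\<lambda>s. aA s + r s)" by (auto simp: aA_def r_def fun_eq_iff)
    hence "h a = h aA + h r" using lin_add[OF assms(1) aA r] by simp
    hence "norm (h a) \<le> norm (h aA) + norm (h r)" by (simp add: norm_triangle_ineq)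
    also have "norm (h aA) \<le> e * l1norm \<omega> a"
    proof -
      have "norm (h aA) = norm (\<Sum>s\<in>A. a s * h (dl s))" unfolding aA_def using restr_eval[OF assms(1) A(1)] by simp
      also have "\<dots> \<le> (\<Sum>s\<in>A. norm (a s * h (dl s)))" by (rule norm_sum)
      also have "\<dots> \<le> (\<Sum>s\<in>A. e * ?g s)"
      proof (rule sum_mono)
        fix s assume "s \<in> A"
        have "norm (a s * h (dl s)) = norm (a s) * norm (h (dl s))" by (simp add: norm_mult)
        also have "\<dots> \<le> norm (a s) * (e * \<omega> s)" by (rule mult_left_mono[OF assms(3)]) simp
        finally show "norm (a s * h (dl s)) \<le> e * ?g s" by (simp add: algebra_simps)
      qed
      also have "\<dots> = e * sum ?g A" by (simp add: sum_distrib_left)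
      also have "sum ?g A \<le> l1norm \<omega> a"
      proof -
        have "infsum ?g (-A) \<ge> 0" by (rule infsum_nonneg) (simp add: w_pos less_imp_le)
        moreover have "infsum ?g (-A) = infsum ?g UNIV - sum ?g A"
          by (rule tail_sum[OF _ A(1)]) (use gs in \<open>auto simp: summable_on_def\<close>)
        ultimately show ?thesis unfolding l1norm_def by simp
      qed
      finally show ?thesis using assms(4) by (simp add: mult_left_mono)
    qed
    also have "norm (h r) \<le> C' * l1norm \<omega> r" using C'(2)[OF r] .
    also have "C' * l1norm \<omega> r \<le> C' * (\<eta> / (C'+1))" using rn C'(1) by (intro mult_left_mono) auto
    also have "C' * (\<eta> / (C'+1)) \<le> \<eta>" using C'(1) \<open>\<eta>>0\<close> by (simp add: field_simps)
    finally show "norm (h a) \<le> e * l1norm \<omega> a + \<eta>" by simp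
  qed
qed

lemma dual_norm_bound:
  assumes "lin \<omega> h" "\<forall>a\<in>l1w \<omega>. norm (h a) \<le> C * l1norm \<omega> a"
    "\<And>s. norm (h (dl s)) \<le> e * \<omega> s" "e \<ge> 0"
  shows "dual_norm \<omega> h \<le> e"
  unfolding dual_norm_def
proof (rule cSup_least)
  show "{norm (h a) |a. a \<in> l1w \<omega> \<and> l1norm \<omega> a \<le> 1} \<noteq> {}"
    using l1w_zero l1norm_zero by auto
next
  fix x assume "x \<in> {norm (h a) |a. a \<in> l1w \<omega> \<and> l1norm \<omega> a \<le> 1}"
  then obtain a where a: "x = norm (h a)" "a \<in> l1w \<omega>" "l1norm \<omega> a \<le> 1" by blast
  have "x \<le> e * l1norm \<omega> a" using dual_bound[OF assms a(2)] a(1) by simp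
  also have "\<dots> \<le> e * 1" using a(3) assms(4) by (intro mult_left_mono) auto
  finally show "x \<le> e" by simp
qed

end

context wsl begin

lemma P_abs:
  assumes a: "a \<in> l1w \<omega>" and b: "b \<in> l1w \<omega>"
  shows "((\<lambda>p. (norm (a (fst p)) * \<omega> (fst p)) * (norm (b (snd p)) * \<omega> (snd p))) has_sum (l1norm \<omega> a * l1norm \<omega> b)) UNIV"
    "(\<lambda>p. (norm (a (fst p)) * \<omega> (fst p)) * (norm (b (snd p)) * \<omega> (snd p))) summable_on X"
    "(\<lambda>p. norm (a (fst p) * b (snd p))) summable_on X"
    "(\<lambda>p. a (fst p) * b (snd p)) summable_on X"
    "norm (a (fst p) * b (snd p)) \<le> (norm (a (fst p)) * \<omega> (fst p)) * (norm (b (snd p)) * \<omega> (snd p))"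
proof -
  let ?Q = "\<lambda>p. (norm (a (fst p)) * \<omega> (fst p)) * (norm (b (snd p)) * \<omega> (snd p))"
  show Qh: "(?Q has_sum (l1norm \<omega> a * l1norm \<omega> b)) UNIV"
    using prod_has_sum_real[of "\<lambda>s. norm (a s) * \<omega> s" UNIV "\<lambda>s. norm (b s) * \<omega> s" UNIV] a b
    by (auto simp: l1w_def l1norm_def w_pos less_imp_le)
  have Qs: "?Q summable_on X" for X using Qh summable_on_subset[of ?Q UNIV X] by (auto simp: summable_on_def)
  then show "?Q summable_on X" .
  have PQ: "norm (a (fst p) * b (snd p)) \<le> ?Q p" for p
    unfolding norm_mult by (rule mult_mono[OF nle nle]) (auto simp: w_pos less_imp_le)
  then show "norm (a (fst p) * b (snd p)) \<le> ?Q p" .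
  have Pabs: "(\<lambda>p. norm (a (fst p) * b (snd p))) summable_on X" for X
    by (rule summable_on_comparison_test[OF Qs]) (use PQ in auto)
  then show "(\<lambda>p. norm (a (fst p) * b (snd p))) summable_on X" .
  show "(\<lambda>p. a (fst p) * b (snd p)) summable_on X" by (rule abs_summable_summable[OF Pabs])
qed

lemma inj_pm: "inj_on (\<lambda>p. (f (fst p) (snd p), p)) X" by (auto simp: inj_on_def)

lemma sigma_img: "Sigma T (\<lambda>t. {p. f (fst p) (snd p) = t}) = (\<lambda>p. (f (fst p) (snd p), p)) ` {p. f (fst p) (snd p) \<in> T}"
  by auto

lemma conv_l1:
  assumes a: "a \<in> l1w \<omega>" and b: "b \<in> l1w \<omega>"
  shows "conv f a b \<in> l1w \<omega>" "l1norm \<omega> (conv f a b) \<le> l1norm \<omega> a * l1norm \<omega> b"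
proof -
  let ?m = "\<lambda>p. f (fst p) (snd p)"
  let ?B = "\<lambda>t. {p. f (fst p) (snd p) = t}"
  let ?P = "\<lambda>p. a (fst p) * b (snd p)"
  let ?Q = "\<lambda>p. (norm (a (fst p)) * \<omega> (fst p)) * (norm (b (snd p)) * \<omega> (snd p))"
  note PA = P_abs[OF a b]
  have QS: "(\<lambda>(t,p). ?Q p) summable_on Sigma UNIV ?B"
    unfolding sigma_img by (subst summable_on_reindex[OF inj_pm]) (simp add: o_def PA(2))
  have R: "(\<lambda>t. infsum ?Q (?B t)) summable_on UNIV"
    using summable_on_Sigma_banach[OF QS] .
  have "infsum (\<lambda>t. infsum ?Q (?B t)) UNIV = infsum (\<lambda>(t,p). ?Q p) (Sigma UNIV ?B)"
    using infsum_Sigma'_banach[OF QS] .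
  also have "\<dots> = infsum ?Q {p. ?m p \<in> UNIV}"
    unfolding sigma_img by (subst infsum_reindex[OF inj_pm]) (simp add: o_def)
  also have "\<dots> = l1norm \<omega> a * l1norm \<omega> b" using infsumI[OF PA(1)] by simp
  finally have Rv: "infsum (\<lambda>t. infsum ?Q (?B t)) UNIV = l1norm \<omega> a * l1norm \<omega> b" .
  have bound: "norm (conv f a b t) * \<omega> t \<le> infsum ?Q (?B t)" for t
  proof -
    have "norm (conv f a b t) \<le> infsum (\<lambda>p. norm (?P p)) (?B t)"
      unfolding conv_def by (rule norm_infsum_bound[OF PA(3)])
    hence "norm (conv f a b t) * \<omega> t \<le> infsum (\<lambda>p. norm (?P p)) (?B t) * \<omega> t"
      by (rule mult_right_mono) (simp add: w_pos less_imp_le)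
    also have "\<dots> = infsum (\<lambda>p. norm (?P p) * \<omega> t) (?B t)"
      by (rule infsum_cmult_left[symmetric]) (use PA(3) in auto)
    also have "\<dots> \<le> infsum ?Q (?B t)"
    proof (rule infsum_mono)
      show "(\<lambda>p. norm (?P p) * \<omega> t) summable_on ?B t" by (rule summable_on_cmult_left[OF PA(3)])
      show "?Q summable_on ?B t" by (rule PA(2))
      fix p assume "p \<in> ?B t"
      then have w: "\<omega> t \<le> \<omega> (fst p) * \<omega> (snd p)" using w_sub by auto
      have "norm (?P p) * \<omega> t \<le> norm (?P p) * (\<omega> (fst p) * \<omega> (snd p))"
        by (rule mult_left_mono[OF w]) simp
      then show "norm (?P p) * \<omega> t \<le> ?Q p" by (simp add: norm_mult algebra_simps)
    qed
    finally show ?thesis .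
  qed
  have cs: "(\<lambda>t. norm (conv f a b t) * \<omega> t) summable_on UNIV"
    by (rule summable_on_comparison_test[OF R]) (use bound in \<open>auto simp: w_pos less_imp_le\<close>)
  then show "conv f a b \<in> l1w \<omega>" by (simp add: l1w_def)
  have "l1norm \<omega> (conv f a b) \<le> infsum (\<lambda>t. infsum ?Q (?B t)) UNIV"
    unfolding l1norm_def by (rule infsum_mono[OF cs R bound])
  then show "l1norm \<omega> (conv f a b) \<le> l1norm \<omega> a * l1norm \<omega> b" using Rv by simp
qed

lemma conv_mult:
  assumes a: "a \<in> l1w \<omega>" and b: "b \<in> l1w \<omega>" and F: "\<And>x y. f x y \<in> F \<longleftrightarrow> x \<in> F \<and> y \<in> F"
  shows "infsum (conv f a b) F = infsum a F * infsum b F"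
proof -
  let ?m = "\<lambda>p. f (fst p) (snd p)"
  let ?B = "\<lambda>t. {p. f (fst p) (snd p) = t}"
  let ?P = "\<lambda>p. a (fst p) * b (snd p)"
  note PA = P_abs[OF a b]
  have PS: "(\<lambda>(t,p). ?P p) summable_on Sigma F ?B"
    unfolding sigma_img by (subst summable_on_reindex[OF inj_pm]) (simp add: o_def PA(4))
  have "infsum (conv f a b) F = infsum (\<lambda>t. infsum ?P (?B t)) F" by (simp add: conv_def)
  also have "\<dots> = infsum (\<lambda>(t,p). ?P p) (Sigma F ?B)" by (rule infsum_Sigma'_banach[OF PS])
  also have "\<dots> = infsum ?P {p. ?m p \<in> F}"
    unfolding sigma_img by (subst infsum_reindex[OF inj_pm]) (simp add: o_def)
  also have "{p. ?m p \<in> F} = F \<times> F" using F by auto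
  also have "infsum ?P (F \<times> F) = infsum a F * infsum b F"
    by (rule infsumI[OF prod_has_sum_cplx[OF l1w_abs[OF a] l1w_abs[OF b]]])
  finally show ?thesis .
qed

lemma conv_dl: "conv f (\<lambda>x. c * dl s x) (\<lambda>x. d * dl t x) = (\<lambda>x. (c*d) * dl (f s t) x)"
proof
  fix x
  let ?g = "\<lambda>p. c * dl s (fst p) * (d * dl t (snd p))"
  have "conv f (\<lambda>x. c * dl s x) (\<lambda>x. d * dl t x) x = infsum ?g {p. f (fst p) (snd p) = x}"
    by (simp add: conv_def)
  also have "\<dots> = infsum ?g ({(s,t)} \<inter> {p. f (fst p) (snd p) = x})"
    by (rule infsum_cong_neutral) (auto simp: dl_def)
  also have "\<dots> = (c*d) * dl (f s t) x"
    by (cases "f s t = x") (auto simp: dl_def)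
  finally show "conv f (\<lambda>x. c * dl s x) (\<lambda>x. d * dl t x) x = (c*d) * dl (f s t) x" .
qed

lemma dl_scale_norm: "l1norm \<omega> (\<lambda>x. c * dl s x) = norm c * \<omega> s"
proof -
  have "((\<lambda>x. norm (c * dl s x) * \<omega> x) has_sum (\<Sum>x\<in>{s}. norm (c * dl s x) * \<omega> x)) UNIV"
    by (rule finsupp_has_sum) (auto simp: dl_def)
  then show ?thesis unfolding l1norm_def by (simp add: infsumI dl_def)
qed

lemma bdd_lin_iff: "bdd_lin_fun \<omega> \<psi> \<longleftrightarrow> lin \<omega> \<psi> \<and> (\<exists>C. \<forall>a\<in>l1w \<omega>. norm (\<psi> a) \<le> C * l1norm \<omega> a)"
  by (simp add: bdd_lin_fun_def lin_def)

lemma pos_bound: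
  assumes "bdd_lin_fun \<omega> \<psi>"
  obtains C where "C \<ge> 0" "\<And>a. a\<in>l1w \<omega> \<Longrightarrow> norm (\<psi> a) \<le> C * l1norm \<omega> a"
proof -
  obtain C where C: "\<forall>a\<in>l1w \<omega>. norm (\<psi> a) \<le> C * l1norm \<omega> a" using assms by (auto simp: bdd_lin_iff)
  show ?thesis
  proof (rule that[of "max C 0"])
    fix a assume "a \<in> l1w \<omega>"
    then have "norm (\<psi> a) \<le> C * l1norm \<omega> a" using C by blast
    also have "\<dots> \<le> max C 0 * l1norm \<omega> a" by (rule mult_right_mono[OF _ l1norm_nonneg]) simp
    finally show "norm (\<psi> a) \<le> max C 0 * l1norm \<omega> a" .
  qed simp
qed

lemma defect_delta:
  assumes psi: "bdd_lin_fun \<omega> \<psi>" and d: "defect f \<omega> \<psi> \<le> \<delta>"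
  shows "norm (\<psi> (dl (f s t)) - \<psi> (dl s) * \<psi> (dl t)) \<le> \<delta> * \<omega> s * \<omega> t"
proof -
  obtain C where C: "C \<ge> 0" "\<And>a. a\<in>l1w \<omega> \<Longrightarrow> norm (\<psi> a) \<le> C * l1norm \<omega> a"
    using pos_bound[OF psi] by blast
  have L: "lin \<omega> \<psi>" using psi by (simp add: bdd_lin_iff)
  let ?S = "{norm (\<psi> (conv f a b) - \<psi> a * \<psi> b) | a b.
       a \<in> l1w \<omega> \<and> b \<in> l1w \<omega> \<and> l1norm \<omega> a \<le> 1 \<and> l1norm \<omega> b \<le> 1}"
  have bdd: "bdd_above ?S"
  proof (rule bdd_aboveI)
    fix x assume "x \<in> ?S"
    then obtain a b where ab: "x = norm (\<psi> (conv f a b) - \<psi> a * \<psi> b)" "a \<in> l1w \<omega>" "b \<in> l1w \<omega>"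
      "l1norm \<omega> a \<le> 1" "l1norm \<omega> b \<le> 1" by blast
    have "l1norm \<omega> (conv f a b) \<le> 1"
      using conv_l1(2)[OF ab(2,3)] ab(4,5) l1norm_nonneg[of a] l1norm_nonneg[of b]
      by (meson mult_le_one order_trans)
    then have n1: "norm (\<psi> (conv f a b)) \<le> C"
      using C(2)[OF conv_l1(1)[OF ab(2,3)]] C(1) mult_left_le order_trans by blast
    have n2: "norm (\<psi> a) \<le> C" using C(2)[OF ab(2)] C(1) ab(4) mult_left_le order_trans by blast
    have n3: "norm (\<psi> b) \<le> C" using C(2)[OF ab(3)] C(1) ab(5) mult_left_le order_trans by blast
    have "x \<le> norm (\<psi> (conv f a b)) + norm (\<psi> a) * norm (\<psi> b)"
      unfolding ab(1) by (metis norm_mult norm_triangle_ineq4)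
    also have "\<dots> \<le> C + C * C" using n1 n2 n3 C(1) by (intro add_mono mult_mono) auto
    finally show "x \<le> C + C * C" .
  qed
  define es where "es = (\<lambda>x. (1 / of_real (\<omega> s)) * dl s x)"
  define et where "et = (\<lambda>x. (1 / of_real (\<omega> t)) * dl t x)"
  have es: "es \<in> l1w \<omega>" "l1norm \<omega> es \<le> 1"
    unfolding es_def by (rule l1w_scale[OF dl_l1], unfold dl_scale_norm) (use w_pos[of s] in \<open>simp add: norm_divide abs_of_pos\<close>)
  have et: "et \<in> l1w \<omega>" "l1norm \<omega> et \<le> 1"
    unfolding et_def by (rule l1w_scale[OF dl_l1], unfold dl_scale_norm) (use w_pos[of t] in \<open>simp add: norm_divide abs_of_pos\<close>)
  have "norm (\<psi> (conv f es et) - \<psi> es * \<psi> et) \<in> ?S" using es et by blast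
  then have "norm (\<psi> (conv f es et) - \<psi> es * \<psi> et) \<le> Sup ?S" by (rule cSup_upper[OF _ bdd])
  also have "Sup ?S \<le> \<delta>" using d unfolding defect_def .
  finally have D: "norm (\<psi> (conv f es et) - \<psi> es * \<psi> et) \<le> \<delta>" .
  have c1: "\<psi> (conv f es et) = ((1 / of_real (\<omega> s)) * (1 / of_real (\<omega> t))) * \<psi> (dl (f s t))"
    unfolding es_def et_def conv_dl by (rule lin_scale[OF L dl_l1])
  have c2: "\<psi> es = (1 / of_real (\<omega> s)) * \<psi> (dl s)" unfolding es_def by (rule lin_scale[OF L dl_l1])
  have c3: "\<psi> et = (1 / of_real (\<omega> t)) * \<psi> (dl t)" unfolding et_def by (rule lin_scale[OF L dl_l1])
  have "\<psi> (conv f es et) - \<psi> es * \<psi> et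
        = (\<psi> (dl (f s t)) - \<psi> (dl s) * \<psi> (dl t)) / (of_real (\<omega> s * \<omega> t))"
    unfolding c1 c2 c3 using w_pos[of s] w_pos[of t] by (simp add: field_simps)
  then have "norm (\<psi> (dl (f s t)) - \<psi> (dl s) * \<psi> (dl t)) / (\<omega> s * \<omega> t) \<le> \<delta>"
    using D w_pos[of s] w_pos[of t] by (simp add: norm_divide norm_mult abs_of_pos)
  then show ?thesis using w_pos[of s] w_pos[of t] by (simp add: divide_le_eq mult.assoc)
qed

end

lemma zlem:
  fixes z :: complex assumes "norm (z - z*z) \<le> \<beta>"
  shows "norm z \<le> 2*\<beta> \<or> norm (z - 1) \<le> 2*\<beta>"
proof -
  have e: "norm (z - z*z) = norm z * norm (z - 1)"
  proof -
    have "z - z*z = - (z * (z - 1))" by (simp add: algebra_simps)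
    then show ?thesis by (simp only: norm_minus_cancel norm_mult)
  qed
  have s: "norm z + norm (z - 1) \<ge> 1" using norm_triangle_ineq[of z "1-z"] by (simp add: norm_minus_commute)
  show ?thesis
  proof (cases "norm z \<ge> 1/2")
    case True
    have "norm (z - 1) * (1/2) \<le> norm (z - 1) * norm z" by (rule mult_left_mono[OF True]) simp
    then have "norm (z - 1) * (1/2) \<le> \<beta>" using assms e by (simp add: mult.commute)
    then show ?thesis by simp
  next
    case False
    then have h: "norm (z - 1) \<ge> 1/2" using s by simp
    have "norm z * (1/2) \<le> norm z * norm (z - 1)" by (rule mult_left_mono[OF h]) simp
    then have "norm z * (1/2) \<le> \<beta>" using assms e by simp
    then show ?thesis by simp
  qed
qed

lemma gen_mono: assumes "A \<subseteq> B" "x \<in> gen f A" shows "x \<in> gen f B"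
  using assms(2) by (induction x rule: gen.induct) (use assms(1) in \<open>auto intro: gen.intros\<close>)

context wsl begin

lemma approx:
  fixes g :: "'a \<Rightarrow> complex"
  assumes eps: "\<epsilon> > 0" and Kd: "K = 4/\<epsilon>" and M1: "M \<ge> 1"
    and Mb: "\<And>x. x \<in> gen f {x. \<omega> x \<le> K} \<Longrightarrow> \<omega> x \<le> M"
    and etad: "\<eta> = min \<epsilon> (1/10)" and d0: "\<delta> \<ge> 0" and d1: "\<delta> \<le> \<epsilon>^2/8" and d2: "\<delta> * M^2 \<le> \<eta>/2"
    and G: "\<And>s t. norm (g (f s t) - g s * g t) \<le> \<delta> * \<omega> s * \<omega> t"
  shows "\<exists>F. (\<forall>x y. f x y \<in> F \<longleftrightarrow> x\<in>F \<and> y\<in>F) \<and> (\<forall>s. norm (g s - (if s\<in>F then 1 else 0)) \<le> \<epsilon> * \<omega> s)"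
proof -
  define W where "W = {x. \<omega> x \<le> K}"
  have eta: "\<eta> > 0" "\<eta> \<le> 1/10" "\<eta> \<le> \<epsilon>" using etad eps by auto
  have pm: "\<delta> * \<omega> x * \<omega> y \<le> \<eta>/2" if "x \<in> gen f W" "y \<in> gen f W" for x y
  proof -
    have "\<omega> x * \<omega> y \<le> M * M" using Mb that w_ge1[of x] w_ge1[of y] M1 unfolding W_def
      by (intro mult_mono) auto
    then have "\<delta> * (\<omega> x * \<omega> y) \<le> \<delta> * (M * M)" using d0 by (rule mult_left_mono)
    then show ?thesis using d2 by (simp add: power2_eq_square mult.assoc)
  qed
  have D: "norm (g x) \<le> \<eta> \<or> norm (g x - 1) \<le> \<eta>" if "x \<in> gen f W" for x
  proof -
    have "norm (g (f x x) - g x * g x) \<le> \<eta>/2" by (rule order_trans[OF G pm[OF that that]])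
    then have "norm (g x - g x * g x) \<le> \<eta>/2" by simp
    from zlem[OF this] show ?thesis by simp
  qed
  define F0 where "F0 = {s \<in> W. norm (g s - 1) \<le> \<eta>}"
  have F0W: "F0 \<subseteq> W" unfolding F0_def by auto
  have gF0: "x \<in> gen f W \<and> norm (g x - 1) \<le> \<eta>" if "x \<in> gen f F0" for x
    using that
  proof (induction x rule: gen.induct)
    case (base x) then show ?case unfolding F0_def by (auto intro: gen.base)
  next
    case (step x y)
    have xy: "f x y \<in> gen f W" using step by (auto intro: gen.step)
    let ?u = "g x" and ?v = "g y"
    have nv: "norm ?v \<le> 1 + \<eta>" using step norm_triangle_ineq[of "?v - 1" 1] by simp
    have eq: "?u * ?v - 1 = (?u - 1) * ?v + (?v - 1)" by (simp add: algebra_simps)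
    have "norm (?u * ?v - 1) \<le> norm ((?u - 1) * ?v) + norm (?v - 1)"
      unfolding eq by (rule norm_triangle_ineq)
    then have "norm (?u * ?v - 1) \<le> norm (?u - 1) * norm ?v + norm (?v - 1)"
      by (simp add: norm_mult)
    also have "\<dots> \<le> \<eta> * (1 + \<eta>) + \<eta>" using step nv eta by (intro add_mono mult_mono) auto
    finally have A: "norm (?u * ?v - 1) \<le> \<eta> * (1 + \<eta>) + \<eta>" .
    have gx: "x \<in> gen f W" "y \<in> gen f W" using step.IH by auto
    have B: "norm (g (f x y) - ?u * ?v) \<le> \<eta>/2" by (rule order_trans[OF G pm[OF gx]])
    have "norm (g (f x y) - 1) \<le> norm (g (f x y) - ?u * ?v) + norm (?u * ?v - 1)"
      using norm_triangle_ineq[of "g (f x y) - ?u * ?v" "?u * ?v - 1"] by simp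
    also have "\<dots> \<le> \<eta>/2 + (\<eta> * (1 + \<eta>) + \<eta>)" using A B by simp
    also have "\<dots> \<le> 3/10"
    proof -
      have "\<eta> * \<eta> \<le> \<eta> * (1/10)" using eta by (intro mult_left_mono) auto
      moreover have "\<eta>/2 + (\<eta> * (1 + \<eta>) + \<eta>) = 5/2*\<eta> + \<eta>*\<eta>" by (simp add: algebra_simps)
      ultimately show ?thesis using eta by linarith
    qed
    finally have C: "norm (g (f x y) - 1) \<le> 3/10" .
    have "\<not> norm (g (f x y)) \<le> \<eta>"
    proof
      assume "norm (g (f x y)) \<le> \<eta>"
      then have "norm (g (f x y) - 1) \<ge> 1 - \<eta>" using norm_triangle_ineq2[of 1 "g (f x y)"]
        by (simp add: norm_minus_commute)
      then show False using C eta by simp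
    qed
    then show ?case using D[OF xy] xy by simp
  qed
  define F where "F = {t. \<exists>x\<in>gen f F0. f x t = x}"
  have filt: "f x y \<in> F \<longleftrightarrow> x\<in>F \<and> y\<in>F" for x y
  proof
    assume "f x y \<in> F"
    then obtain z where z: "z \<in> gen f F0" "f z (f x y) = z" unfolding F_def by blast
    have h1: "f (f x y) x = f x y"
    proof -
      have "f (f x y) x = f x (f x y)" by (rule commute)
      also have "\<dots> = f x y" by (rule left_idem)
      finally show ?thesis .
    qed
    have h2: "f (f x y) y = f x y"
    proof -
      have "f (f x y) y = f x (f y y)" by (rule assoc)
      also have "\<dots> = f x y" by (simp only: idem)
      finally show ?thesis .
    qed
    have "f z x = f (f z (f x y)) x" using z(2) by simp
    also have "\<dots> = f z (f (f x y) x)" by (rule assoc)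
    also have "\<dots> = z" using z(2) by (simp only: h1)
    finally have 1: "f z x = z" .
    have "f z y = f (f z (f x y)) y" using z(2) by simp
    also have "\<dots> = f z (f (f x y) y)" by (rule assoc)
    also have "\<dots> = z" using z(2) by (simp only: h2)
    finally have "f z y = z" .
    then show "x \<in> F \<and> y \<in> F" using 1 z(1) unfolding F_def by blast
  next
    assume "x \<in> F \<and> y \<in> F"
    then obtain z1 z2 where z: "z1 \<in> gen f F0" "f z1 x = z1" "z2 \<in> gen f F0" "f z2 y = z2"
      unfolding F_def by blast
    have "f (f z1 z2) (f x y) = f z1 (f z2 (f x y))" by (rule assoc)
    also have "\<dots> = f z1 (f x (f z2 y))" by (simp only: left_commute[of z2 x y])
    also have "\<dots> = f z1 (f x z2)" by (simp only: z(4))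
    also have "\<dots> = f (f z1 x) z2" by (rule assoc[symmetric])
    also have "\<dots> = f z1 z2" by (simp only: z(2))
    finally have "f (f z1 z2) (f x y) = f z1 z2" .
    moreover have "f z1 z2 \<in> gen f F0" by (rule gen.step[OF z(1) z(3)])
    ultimately show "f x y \<in> F" unfolding F_def by blast
  qed
  have E1: "norm (g t - 1) \<le> \<eta>" if tW: "t \<in> W" and tF: "t \<in> F" for t
  proof -
    obtain x where x: "x \<in> gen f F0" "f x t = x" using tF unfolding F_def by blast
    have xg: "x \<in> gen f W" "norm (g x - 1) \<le> \<eta>" using gF0[OF x(1)] by auto
    have tg: "t \<in> gen f W" using tW by (auto intro: gen.base)
    have "norm (g x - g x * g t) = norm (g (f x t) - g x * g t)" using x(2) by simp
    also have "\<dots> \<le> \<eta>/2" by (rule order_trans[OF G pm[OF xg(1) tg]])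
    finally have B: "norm (g x - g x * g t) \<le> \<eta>/2" .
    have nx: "norm (g x) \<ge> 1 - \<eta>" using xg(2) norm_triangle_ineq2[of 1 "g x"] by (simp add: norm_minus_commute)
    have "\<not> norm (g t) \<le> \<eta>"
    proof
      assume a: "norm (g t) \<le> \<eta>"
      have "norm (g x) \<le> norm (g x - g x * g t) + norm (g x * g t)"
        using norm_triangle_ineq[of "g x - g x * g t" "g x * g t"] by simp
      also have "\<dots> \<le> \<eta>/2 + norm (g x) * \<eta>"
      proof -
        have "norm (g x * g t) \<le> norm (g x) * \<eta>" unfolding norm_mult by (rule mult_left_mono[OF a]) simp
        then show ?thesis using B by linarith
      qed
      finally have "norm (g x) * (1 - \<eta>) \<le> \<eta>/2" by (simp add: algebra_simps)
      moreover have "(1 - \<eta>) * (1 - \<eta>) \<le> norm (g x) * (1 - \<eta>)" using nx eta by (intro mult_right_mono) auto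
      moreover have "(1 - \<eta>) * (1 - \<eta>) \<ge> 8/10"
      proof -
        have "(1 - \<eta>) * (1 - \<eta>) = 1 - 2*\<eta> + \<eta>*\<eta>" by (simp add: algebra_simps)
        moreover have "\<eta>*\<eta> \<ge> 0" by simp
        ultimately show ?thesis using eta by linarith
      qed
      ultimately show False using eta by simp
    qed
    then show ?thesis using D[OF tg] by simp
  qed
  have E2: "norm (g t) \<le> \<eta>" if "t \<in> W" "t \<notin> F" for t
  proof -
    have "t \<notin> F0"
    proof
      assume "t \<in> F0"
      then have "t \<in> gen f F0" by (rule gen.base)
      then show False using that(2) unfolding F_def by auto
    qed
    then have "\<not> norm (g t - 1) \<le> \<eta>" using that(1) unfolding F0_def by auto
    then show ?thesis using D[of t] that(1) by (auto intro: gen.base)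
  qed
  have Lg: "norm (g t) \<le> (\<epsilon>/2) * \<omega> t" if "\<omega> t > K" for t
  proof (rule ccontr)
    assume na: "\<not> norm (g t) \<le> (\<epsilon>/2) * \<omega> t"
    define r where "r = norm (g t)"
    define w where "w = \<omega> t"
    have w4: "\<epsilon> * w > 4" using that Kd eps unfolding w_def by (simp add: field_simps)
    have r1: "r > (\<epsilon>/2) * w" using na unfolding r_def w_def by simp
    have r2: "r > 2" using r1 w4 by simp
    have "r * r - r \<le> norm (g t * g t - g t)"
      unfolding r_def using norm_triangle_ineq2[of "g t * g t" "g t"] by (simp add: norm_mult)
    also have "\<dots> = norm (g t - g t * g t)" by (simp add: norm_minus_commute)
    also have "\<dots> \<le> \<delta> * w * w" using G[of t t] unfolding w_def by simp
    finally have q: "r * r - r \<le> \<delta> * w * w" .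
    have "r * 2 \<le> r * r" using r2 by (intro mult_left_mono) auto
    then have "r * r \<le> 2 * (r * r - r)" by simp
    also have "\<dots> \<le> 2 * (\<delta> * w * w)" using q by simp
    also have "\<dots> \<le> 2 * (\<epsilon>^2/8 * w * w)"
    proof -
      have h: "\<delta> * (w*w) \<le> \<epsilon>^2/8 * (w*w)" by (rule mult_right_mono[OF d1]) simp
      have e1: "\<delta> * w * w = \<delta> * (w*w)" by (simp add: mult.assoc)
      have e2: "\<epsilon>^2/8 * w * w = \<epsilon>^2/8 * (w*w)" by (simp add: mult.assoc)
      show ?thesis unfolding e1 e2 using h by linarith
    qed
    also have "\<dots> = ((\<epsilon>/2) * w) * ((\<epsilon>/2) * w)" by (simp add: power2_eq_square field_simps)
    also have "\<dots> < r * r" using r1 w4 eps by (intro mult_strict_mono) auto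
    finally show False by simp
  qed
  have fin: "norm (g s - (if s\<in>F then 1 else 0)) \<le> \<epsilon> * \<omega> s" for s
  proof (cases "\<omega> s \<le> K")
    case True
    then have sW: "s \<in> W" unfolding W_def by simp
    have "norm (g s - (if s\<in>F then 1 else 0)) \<le> \<eta>" using E1[OF sW] E2[OF sW] by auto
    also have "\<eta> \<le> \<epsilon> * 1" using eta by simp
    also have "\<dots> \<le> \<epsilon> * \<omega> s" using eps w_ge1 by (intro mult_left_mono) auto
    finally show ?thesis .
  next
    case False
    have w4: "\<epsilon> * \<omega> s > 4" using False Kd eps by (simp add: field_simps)
    have "norm (g s - (if s\<in>F then 1 else 0)) \<le> norm (g s) + 1"
      using norm_triangle_ineq4[of "g s" "if s\<in>F then 1 else 0"] by (auto split: if_splits)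
    also have "\<dots> \<le> (\<epsilon>/2) * \<omega> s + 1" using Lg False by simp
    also have "\<dots> \<le> \<epsilon> * \<omega> s" using w4 by simp
    finally show ?thesis .
  qed
  show ?thesis using filt fin by blast
qed

end

context wsl begin

lemma char_bound:
  assumes a: "a \<in> l1w \<omega>" shows "norm (infsum a F) \<le> l1norm \<omega> a"
proof -
  have ws: "(\<lambda>s. norm (a s) * \<omega> s) summable_on X" for X
    using summable_on_subset[OF _ subset_UNIV] a by (auto simp: l1w_def)
  have "norm (infsum a F) \<le> infsum (\<lambda>s. norm (a s)) F" by (rule norm_infsum_bound[OF l1w_abs[OF a]])
  also have "\<dots> \<le> infsum (\<lambda>s. norm (a s) * \<omega> s) F"
    by (rule infsum_mono[OF l1w_abs[OF a] ws]) (rule nle)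
  also have "\<dots> \<le> l1norm \<omega> a" unfolding l1norm_def
    by (rule infsum_mono_neutral[OF ws ws]) (auto simp: w_pos less_imp_le)
  finally show ?thesis .
qed

lemma char_mult:
  assumes F: "\<And>x y. f x y \<in> F \<longleftrightarrow> x \<in> F \<and> y \<in> F"
  shows "mult_fun f \<omega> (\<lambda>a. infsum a F)"
  unfolding mult_fun_def bdd_lin_iff
proof (intro conjI)
  show "lin \<omega> (\<lambda>a. infsum a F)" unfolding lin_def
  proof (intro conjI ballI allI)
    fix a b assume a: "a \<in> l1w \<omega>" and b: "b \<in> l1w \<omega>"
    show "infsum (\<lambda>s. a s + b s) F = infsum a F + infsum b F"
      by (rule infsum_add[OF l1w_summ[OF a] l1w_summ[OF b]])
  next
    fix a c assume a: "a \<in> l1w \<omega>"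
    show "infsum (\<lambda>s. c * a s) F = c * infsum a F"
      by (rule infsum_cmult_right) (rule l1w_summ[OF a])
  qed
  show "\<exists>C. \<forall>a\<in>l1w \<omega>. norm (infsum a F) \<le> C * l1norm \<omega> a"
    using char_bound by (intro exI[of _ 1]) simp
  show "\<forall>a\<in>l1w \<omega>. \<forall>b\<in>l1w \<omega>. infsum (conv f a b) F = infsum a F * infsum b F"
    using conv_mult[OF _ _ F] by blast
qed

lemma char_dl: "infsum (dl s) F = (if s \<in> F then 1 else 0)"
proof -
  have "infsum (dl s) F = infsum (dl s) ({s} \<inter> F)"
    by (rule infsum_cong_neutral) (auto simp: dl_def)
  then show ?thesis by (cases "s \<in> F") (auto simp: dl_def)
qed

lemma main:
  assumes fl: "flighty f \<omega>"
  shows "AMNM f \<omega>"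
  unfolding AMNM_def
proof (intro allI impI)
  fix \<epsilon> :: real assume eps: "\<epsilon> > 0"
  define K where "K = 4/\<epsilon>"
  have "K > 0" using eps by (simp add: K_def)
  then obtain M0 where M0: "\<And>x. x \<in> gen f {x. \<omega> x \<le> K} \<Longrightarrow> \<omega> x \<le> M0"
    using fl unfolding flighty_def bdd_above_def by fast
  define M where "M = max M0 1"
  have M1: "M \<ge> 1" by (simp add: M_def)
  have Mb: "\<And>x. x \<in> gen f {x. \<omega> x \<le> K} \<Longrightarrow> \<omega> x \<le> M"
    using M0 unfolding M_def by force
  define \<eta> where "\<eta> = min \<epsilon> (1/10)"
  have eta: "\<eta> > 0" using eps by (simp add: \<eta>_def)
  define \<delta> where "\<delta> = min (\<epsilon>^2/8) (\<eta>/(2*M^2))"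
  have dpos: "\<delta> > 0" using eps eta M1 by (simp add: \<delta>_def)
  have d1: "\<delta> \<le> \<epsilon>^2/8" by (simp add: \<delta>_def)
  have d2: "\<delta> * M^2 \<le> \<eta>/2"
  proof -
    have "\<delta> \<le> \<eta>/(2*M^2)" by (simp add: \<delta>_def)
    then have "\<delta> * M^2 \<le> \<eta>/(2*M^2) * M^2" by (rule mult_right_mono) simp
    also have "\<dots> = \<eta>/2" using M1 by (simp add: field_simps)
    finally show ?thesis .
  qed
  show "\<exists>\<delta>>0. \<forall>\<psi>. bdd_lin_fun \<omega> \<psi> \<and> defect f \<omega> \<psi> \<le> \<delta> \<longrightarrow>
      (\<exists>\<phi>. mult_fun f \<omega> \<phi> \<and> dual_norm \<omega> (\<lambda>a. \<psi> a - \<phi> a) \<le> \<epsilon>)"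
  proof (intro exI[of _ \<delta>] conjI allI impI)
    show "\<delta> > 0" by (rule dpos)
    fix \<psi> assume "bdd_lin_fun \<omega> \<psi> \<and> defect f \<omega> \<psi> \<le> \<delta>"
    then have psi: "bdd_lin_fun \<omega> \<psi>" and d: "defect f \<omega> \<psi> \<le> \<delta>" by auto
    have G: "\<And>s t. norm (\<psi> (dl (f s t)) - \<psi> (dl s) * \<psi> (dl t)) \<le> \<delta> * \<omega> s * \<omega> t"
      by (rule defect_delta[OF psi d])
    obtain F where F: "\<forall>x y. f x y \<in> F \<longleftrightarrow> x\<in>F \<and> y\<in>F"
      "\<forall>s. norm (\<psi> (dl s) - (if s\<in>F then 1 else 0)) \<le> \<epsilon> * \<omega> s"
      using approx[OF eps K_def M1 Mb \<eta>_def less_imp_le[OF dpos] d1 d2 G] by blast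
    let ?\<phi> = "\<lambda>a. infsum a F"
    have phi: "mult_fun f \<omega> ?\<phi>" by (rule char_mult) (use F(1) in blast)
    obtain C where C: "C \<ge> 0" "\<And>a. a\<in>l1w \<omega> \<Longrightarrow> norm (\<psi> a) \<le> C * l1norm \<omega> a"
      using pos_bound[OF psi] by blast
    have Lpsi: "lin \<omega> \<psi>" using psi by (simp add: bdd_lin_iff)
    have Lphi: "lin \<omega> ?\<phi>" using phi by (simp add: mult_fun_def bdd_lin_iff)
    have L: "lin \<omega> (\<lambda>a. \<psi> a - ?\<phi> a)"
      using Lpsi Lphi unfolding lin_def by (simp add: algebra_simps)
    have bd: "\<forall>a\<in>l1w \<omega>. norm (\<psi> a - ?\<phi> a) \<le> (C+1) * l1norm \<omega> a"
    proof
      fix a assume a: "a \<in> l1w \<omega>"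
      have "norm (\<psi> a - ?\<phi> a) \<le> norm (\<psi> a) + norm (?\<phi> a)" by (rule norm_triangle_ineq4)
      also have "\<dots> \<le> C * l1norm \<omega> a + l1norm \<omega> a" using C(2)[OF a] char_bound[OF a] by (rule add_mono)
      finally show "norm (\<psi> a - ?\<phi> a) \<le> (C+1) * l1norm \<omega> a" by (simp add: algebra_simps)
    qed
    have ds: "norm (\<psi> (dl s) - ?\<phi> (dl s)) \<le> \<epsilon> * \<omega> s" for s
      using F(2) by (simp only: char_dl)
    show "\<exists>\<phi>. mult_fun f \<omega> \<phi> \<and> dual_norm \<omega> (\<lambda>a. \<psi> a - \<phi> a) \<le> \<epsilon>"
      using phi dual_norm_bound[OF L bd ds] eps by auto
  qed
qed

end

theorem theoremt:
  fixes f :: "'a \<Rightarrow> 'a \<Rightarrow> 'a" and \<omega> :: "'a \<Rightarrow> real"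
  assumes "semilattice f"
    and "submult_weight f \<omega>"
    and "flighty f \<omega>"
  shows "AMNM f \<omega>"
proof -
  have "wsl f \<omega>" by (intro wsl.intro wsl_axioms.intro assms(1,2))
  then show ?thesis using wsl.main assms(3) by blast
qed

end
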